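(* For any $H>1$, $\zeta\in[0,1]$ and $c\in(0,1/6]$, there exist two episodic MDPs $\mathcal{M}^{\mathsf{real},1},\mathcal{M}^{\mathsf{real},2}$ (with common state space, action set, rewards, initial state and horizon $H$) and a finite function class $\mathcal{F}$ such that each of $\mathcal{M}^{\mathsf{real},1},\mathcal{M}^{\mathsf{real},2}$ is a low-rank MDP and $\mathcal{F}$ is Bellman complete with respect to each of them, and such that, for an absolute constant $c_0>0$, whenever $T< c_0\,2^{H/2}$, running the $\zeta$-greedy exploration protocol for $T$ episodes (with any rule for proposing $\widehat{\pi}$ from the collected data) yields $$\sup_{\mathcal{M}\in\{\mathcal{M}^{\mathsf{real},1},\mathcal{M}^{\mathsf{real},2}\}}\mathbb{E}^{\mathcal{M}}\big[V_0^{\mathcal{M},\star}-V_0^{\mathcal{M},\widehat{\pi}}\big]\ge c/32.$$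
   Context: Episodic MDP $\mathcal{M}=(\mathcal{S},\mathcal{A},\{P_h\},\{r_h\},s_1,H)$ with finite action set $\mathcal{A}$, deterministic rewards $r_h\in[0,1]$; $V_0^{\mathcal{M},\pi}$ is the expected total reward of $\pi$ from $s_1$ and $V_0^{\mathcal{M},\star}=\sup_\pi V_0^{\mathcal{M},\pi}$. Low-rank MDP of dimension $d$: $P_h(\cdot\mid s,a)=\langle\boldsymbol{\phi}(s,a),\boldsymbol{\mu}_h(\cdot)\rangle$ for some $\boldsymbol{\phi}:\mathcal{S}\times\mathcal{A}\to\mathbb{R}^d$ with $\|\boldsymbol{\phi}\|_2\le1$ and $\mathbb{R}^d$-valued signed measures $\boldsymbol{\mu}_h$ with $\|\int|\mathrm{d}\boldsymbol{\mu}_h|\|_2\le\sqrt d$. $\mathcal{F}=\mathcal{F}_1\times\cdots\times\mathcal{F}_H$ with $\mathcal{F}_h$ functions $\mathcal{S}\times\mathcal{A}\to[0,H]$, $f_{H+1}=0$; Bellman operator $\mathcal{T}f_{h+1}(s,a)=r_h(s,a)+\mathbb{E}_{s'\sim P_h(\cdot\mid s,a)}\max_{a'}f_{h+1}(s',a')$; Bellman complete means $\mathcal{T}f_{h+1}\in\mathcal{F}_h$ for all $f_{h+1}\in\mathcal{F}_{h+1}$. For $f$, $\pi^f_h(s)=\arg\max_a f_h(s,a)$. $\zeta$-greedy exploration protocol on an MDP $\mathcal{M}$ with time horizon $T$: interact for $T$ episodes; at every step $h$ of episode $t+1$ play $\pi^{f^t}_h(s)$ with probability $1-\zeta$ and an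 action drawn uniformly from $\mathcal{A}$ otherwise, where $f_h^t=\arg\min_{f\in\mathcal{F}_h}\sum_{t'=1}^t(f(s_h^{t'},a_h^{t'})-r_h^{t'}-\max_{a'}f^t_{h+1}(s^{t'}_{h+1},a'))^2$ computed on the data collected through episode $t$; afterwards, using the collected data in any way, propose a policy $\widehat{\pi}$. *)

theory Defs
  imports "HOL-Probability.Probability"
begin

text \<open>Steps are h = 1..H. A (randomized Markov) policy is
  pol h s :: nat pmf. An episode is the list [(s_1,a_1),...,(s_H,a_H)].\<close>

definition act_pmf :: "real \<Rightarrow> nat set \<Rightarrow> nat \<Rightarrow> nat pmf" where
  "act_pmf \<zeta> A a0 = bind_pmf (bernoulli_pmf \<zeta>) (\<lambda>b. if b then pmf_of_set A else return_pmf a0)"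

primrec roll :: "(nat \<Rightarrow> nat \<Rightarrow> nat \<Rightarrow> nat pmf) \<Rightarrow> (nat \<Rightarrow> nat \<Rightarrow> nat pmf) \<Rightarrow> nat \<Rightarrow> nat \<Rightarrow> nat
                 \<Rightarrow> (nat \<times> nat) list pmf" where
  "roll P pol h 0 s = return_pmf []"
| "roll P pol h (Suc k) s =
     bind_pmf (pol h s) (\<lambda>a. bind_pmf (P h s a)
       (\<lambda>s'. map_pmf (\<lambda>rest. (s, a) # rest) (roll P pol (Suc h) k s')))"

definition ep_return :: "(nat \<Rightarrow> nat \<Rightarrow> nat \<Rightarrow> real) \<Rightarrow> (nat \<times> nat) list \<Rightarrow> real" where
  "ep_return r ep = (\<Sum>i<length ep. r (Suc i) (fst (ep ! i)) (snd (ep ! i)))"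

definition pol_value :: "(nat \<Rightarrow> nat \<Rightarrow> nat \<Rightarrow> nat pmf) \<Rightarrow> (nat \<Rightarrow> nat \<Rightarrow> nat \<Rightarrow> real) \<Rightarrow> nat \<Rightarrow> nat
                     \<Rightarrow> (nat \<Rightarrow> nat \<Rightarrow> nat pmf) \<Rightarrow> real" where
  "pol_value P r s1 H pol = measure_pmf.expectation (roll P pol 1 H s1) (ep_return r)"

definition opt_value :: "(nat \<Rightarrow> nat \<Rightarrow> nat \<Rightarrow> nat pmf) \<Rightarrow> (nat \<Rightarrow> nat \<Rightarrow> nat \<Rightarrow> real) \<Rightarrow> nat \<Rightarrow> nat
                         \<Rightarrow> nat set \<Rightarrow> real" where
  "opt_value P r s1 H A = (SUP pol \<in> {pol. \<forall>h s. set_pmf (pol h s) \<subseteq> A}. pol_value P r s1 H pol)"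

text \<open>Low-rank MDP of dimension d (on the countable state space nat, a signed measure is given by
  an absolutely summable point-mass function; vectors in R^d are functions on {..<d}).\<close>
definition low_rank_dim :: "(nat \<Rightarrow> nat \<Rightarrow> nat \<Rightarrow> nat pmf) \<Rightarrow> nat set \<Rightarrow> nat \<Rightarrow> nat \<Rightarrow> bool" where
  "low_rank_dim P A H d \<longleftrightarrow>
     (\<exists>(\<phi> :: nat \<Rightarrow> nat \<Rightarrow> nat \<Rightarrow> real) (\<mu> :: nat \<Rightarrow> nat \<Rightarrow> nat \<Rightarrow> real).
        (\<forall>s. \<forall>a\<in>A. sqrt (\<Sum>i<d. (\<phi> s a i)\<^sup>2) \<le> 1) \<and>
        (\<forall>h\<in>{1..H}.
           (\<forall>i<d. summable (\<lambda>s'. \<bar>\<mu> h s' i\<bar>)) \<and>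
           sqrt (\<Sum>i<d. (\<Sum>s'. \<bar>\<mu> h s' i\<bar>)\<^sup>2) \<le> sqrt (real d) \<and>
           (\<forall>s. \<forall>a\<in>A. \<forall>s'. pmf (P h s a) s' = (\<Sum>i<d. \<phi> s a i * \<mu> h s' i))))"

definition low_rank :: "(nat \<Rightarrow> nat \<Rightarrow> nat \<Rightarrow> nat pmf) \<Rightarrow> nat set \<Rightarrow> nat \<Rightarrow> bool" where
  "low_rank P A H \<longleftrightarrow> (\<exists>d. low_rank_dim P A H d)"

definition bellman_op :: "(nat \<Rightarrow> nat \<Rightarrow> nat \<Rightarrow> nat pmf) \<Rightarrow> (nat \<Rightarrow> nat \<Rightarrow> nat \<Rightarrow> real) \<Rightarrow> nat set
                          \<Rightarrow> nat \<Rightarrow> (nat \<Rightarrow> nat \<Rightarrow> real) \<Rightarrow> nat \<Rightarrow> nat \<Rightarrow> real" where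
  "bellman_op P r A h g s a =
     r h s a + measure_pmf.expectation (P h s a) (\<lambda>s'. Max ((\<lambda>a'. g s' a') ` A))"

text \<open>F = F_1 x ... x F_H given by Fc h (h = 1..H); f_{H+1} = 0. Functions are compared on S x A.\<close>
definition bellman_complete :: "(nat \<Rightarrow> nat \<Rightarrow> nat \<Rightarrow> nat pmf) \<Rightarrow> (nat \<Rightarrow> nat \<Rightarrow> nat \<Rightarrow> real) \<Rightarrow> nat set
                                \<Rightarrow> nat \<Rightarrow> (nat \<Rightarrow> (nat \<Rightarrow> nat \<Rightarrow> real) set) \<Rightarrow> bool" where
  "bellman_complete P r A H Fc \<longleftrightarrow>
     (\<forall>h\<in>{1..<H}. \<forall>g\<in>Fc (Suc h). \<exists>f\<in>Fc h. \<forall>s. \<forall>a\<in>A. f s a = bellman_op P r A h g s a) \<and>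
     (\<exists>f\<in>Fc H. \<forall>s. \<forall>a\<in>A. f s a = bellman_op P r A H (\<lambda>_ _. 0) s a)"

text \<open>Squared regression loss at step h of candidate g, with next-step function gnext, on data D
  (a list of episodes). For h = H, gnext = 0, so the (out of range) state s_{H+1} is irrelevant.\<close>
definition sq_loss :: "(nat \<Rightarrow> nat \<Rightarrow> nat \<Rightarrow> real) \<Rightarrow> nat set \<Rightarrow> nat \<Rightarrow> (nat \<Rightarrow> nat \<Rightarrow> real)
                       \<Rightarrow> (nat \<Rightarrow> nat \<Rightarrow> real) \<Rightarrow> (nat \<times> nat) list list \<Rightarrow> real" where
  "sq_loss r A h g gnext D =
     sum_list (map (\<lambda>ep. (g (fst (ep ! (h - 1))) (snd (ep ! (h - 1)))
                           - r h (fst (ep ! (h - 1))) (snd (ep ! (h - 1)))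
                           - Max ((\<lambda>a'. gnext (fst (ep ! h)) a') ` A))\<^sup>2) D)"

text \<open>An arbitrary (data-dependent) tie-breaking rule returning a least-squares minimiser in Fc h.\<close>
definition is_reg_oracle :: "(nat \<Rightarrow> nat \<Rightarrow> nat \<Rightarrow> real) \<Rightarrow> nat set \<Rightarrow> nat \<Rightarrow> (nat \<Rightarrow> (nat \<Rightarrow> nat \<Rightarrow> real) set)
      \<Rightarrow> (nat \<Rightarrow> (nat \<times> nat) list list \<Rightarrow> (nat \<Rightarrow> nat \<Rightarrow> real) \<Rightarrow> (nat \<Rightarrow> nat \<Rightarrow> real)) \<Rightarrow> bool" where
  "is_reg_oracle r A H Fc ora \<longleftrightarrow>
     (\<forall>h\<in>{1..H}. \<forall>D gnext. ora h D gnext \<in> Fc h \<and>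
        (\<forall>f\<in>Fc h. sq_loss r A h (ora h D gnext) gnext D \<le> sq_loss r A h f gnext D))"

primrec fit_rev :: "(nat \<Rightarrow> (nat \<times> nat) list list \<Rightarrow> (nat \<Rightarrow> nat \<Rightarrow> real) \<Rightarrow> (nat \<Rightarrow> nat \<Rightarrow> real))
                    \<Rightarrow> nat \<Rightarrow> (nat \<times> nat) list list \<Rightarrow> nat \<Rightarrow> (nat \<Rightarrow> nat \<Rightarrow> real)" where
  "fit_rev ora H D 0 = ora H D (\<lambda>_ _. 0)"
| "fit_rev ora H D (Suc m) = ora (H - Suc m) D (fit_rev ora H D m)"

text \<open>f^t_h computed backwards from f_{H+1} = 0 on data D.\<close>
definition fitted :: "(nat \<Rightarrow> (nat \<times> nat) list list \<Rightarrow> (nat \<Rightarrow> nat \<Rightarrow> real) \<Rightarrow> (nat \<Rightarrow> nat \<Rightarrow> real))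
                      \<Rightarrow> nat \<Rightarrow> (nat \<times> nat) list list \<Rightarrow> nat \<Rightarrow> (nat \<Rightarrow> nat \<Rightarrow> real)" where
  "fitted ora H D h = fit_rev ora H D (H - h)"

text \<open>An arbitrary tie-breaking rule for the greedy policy pi^f_h(s) = argmax_a f_h(s,a).\<close>
definition is_greedy_sel :: "nat set \<Rightarrow> (nat \<Rightarrow> (nat \<Rightarrow> nat \<Rightarrow> real) \<Rightarrow> nat \<Rightarrow> nat) \<Rightarrow> bool" where
  "is_greedy_sel A gsel \<longleftrightarrow> (\<forall>h g s. gsel h g s \<in> A \<and> (\<forall>a\<in>A. g s a \<le> g s (gsel h g s)))"

definition behavior :: "real \<Rightarrow> nat set \<Rightarrow> (nat \<Rightarrow> (nat \<Rightarrow> nat \<Rightarrow> real) \<Rightarrow> nat \<Rightarrow> nat)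
      \<Rightarrow> (nat \<Rightarrow> (nat \<times> nat) list list \<Rightarrow> (nat \<Rightarrow> nat \<Rightarrow> real) \<Rightarrow> (nat \<Rightarrow> nat \<Rightarrow> real))
      \<Rightarrow> nat \<Rightarrow> (nat \<times> nat) list list \<Rightarrow> nat \<Rightarrow> nat \<Rightarrow> nat pmf" where
  "behavior \<zeta> A gsel ora H D = (\<lambda>h s. act_pmf \<zeta> A (gsel h (fitted ora H D h) s))"

primrec data_pmf :: "(nat \<Rightarrow> nat \<Rightarrow> nat \<Rightarrow> nat pmf) \<Rightarrow> nat \<Rightarrow> nat set \<Rightarrow> nat \<Rightarrow> real
      \<Rightarrow> (nat \<Rightarrow> (nat \<times> nat) list list \<Rightarrow> (nat \<Rightarrow> nat \<Rightarrow> real) \<Rightarrow> (nat \<Rightarrow> nat \<Rightarrow> real))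
      \<Rightarrow> (nat \<Rightarrow> (nat \<Rightarrow> nat \<Rightarrow> real) \<Rightarrow> nat \<Rightarrow> nat) \<Rightarrow> nat \<Rightarrow> (nat \<times> nat) list list pmf" where
  "data_pmf P s1 A H \<zeta> ora gsel 0 = return_pmf []"
| "data_pmf P s1 A H \<zeta> ora gsel (Suc t) =
     bind_pmf (data_pmf P s1 A H \<zeta> ora gsel t)
       (\<lambda>D. map_pmf (\<lambda>e. D @ [e]) (roll P (behavior \<zeta> A gsel ora H D) 1 H s1))"

definition exp_subopt :: "(nat \<Rightarrow> nat \<Rightarrow> nat \<Rightarrow> nat pmf) \<Rightarrow> (nat \<Rightarrow> nat \<Rightarrow> nat \<Rightarrow> real) \<Rightarrow> nat \<Rightarrow> nat set
      \<Rightarrow> nat \<Rightarrow> real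
      \<Rightarrow> (nat \<Rightarrow> (nat \<times> nat) list list \<Rightarrow> (nat \<Rightarrow> nat \<Rightarrow> real) \<Rightarrow> (nat \<Rightarrow> nat \<Rightarrow> real))
      \<Rightarrow> (nat \<Rightarrow> (nat \<Rightarrow> nat \<Rightarrow> real) \<Rightarrow> nat \<Rightarrow> nat)
      \<Rightarrow> ((nat \<times> nat) list list \<Rightarrow> nat \<Rightarrow> nat \<Rightarrow> nat pmf) \<Rightarrow> nat \<Rightarrow> real" where
  "exp_subopt P r s1 A H \<zeta> ora gsel pihat T =
     measure_pmf.expectation (data_pmf P s1 A H \<zeta> ora gsel T)
       (\<lambda>D. opt_value P r s1 H A - pol_value P r s1 H (pihat D))"

end

theory Submission
  imports Defs
begin



lemma int_bind_pmf:
  fixes f :: "'b \<Rightarrow> real"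
  assumes "\<And>x. \<bar>f x\<bar> \<le> B"
  shows "measure_pmf.expectation (bind_pmf M N) f = measure_pmf.expectation M (\<lambda>x. measure_pmf.expectation (N x) f)"
  unfolding measure_pmf_bind
  apply (rule integral_bind[where K="count_space UNIV" and B=B and B'=1])
  using assms apply (auto simp: measure_pmf.emeasure_space_1 space_subprob_algebra prob_space_imp_subprob_space measure_pmf.prob_space_axioms)
  done

lemma integrable_bnd:
  fixes f :: "'b \<Rightarrow> real"
  assumes "\<And>x. \<bar>f x\<bar> \<le> B"
  shows "integrable (measure_pmf M) f"
  by (rule measure_pmf.integrable_const_bound[where B=B]) (use assms in auto)

lemma exp_bounds:
  fixes f :: "'b \<Rightarrow> real"
  assumes "\<And>x. a \<le> f x" "\<And>x. f x \<le> b"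
  shows "a \<le> measure_pmf.expectation M f \<and> measure_pmf.expectation M f \<le> b"
proof -
  have i: "integrable (measure_pmf M) f"
    by (rule integrable_bnd[where B="\<bar>a\<bar> + \<bar>b\<bar>"]) (smt (verit) assms)
  have "measure_pmf.expectation M (\<lambda>x. a) \<le> measure_pmf.expectation M f"
    by (rule integral_mono) (use i assms in auto)
  moreover have "measure_pmf.expectation M f \<le> measure_pmf.expectation M (\<lambda>x. b)"
    by (rule integral_mono) (use i assms in auto)
  ultimately show ?thesis by simp
qed

lemma exp_const[simp]: "measure_pmf.expectation M (\<lambda>x. c::real) = c"
  by simp

lemma roll_len: "x \<in> set_pmf (roll P pol h k s) \<Longrightarrow> length x = k"
  by (induction k arbitrary: h s x) auto

lemma roll_hd_map: "map_pmf (\<lambda>r. fst (r ! 0)) (roll P pol h (Suc k) s) = return_pmf s"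
  by (simp add: map_bind_pmf map_pmf_comp)

lemma roll_pair:
  "map_pmf (\<lambda>e. (e ! 0, fst (e ! 1))) (roll P pol h (Suc (Suc k)) s) =
   bind_pmf (pol h s) (\<lambda>a. map_pmf (\<lambda>s'. ((s, a), s')) (P h s a))"
proof -
  have "map_pmf (\<lambda>r. ((s,a), fst (r ! 0))) (roll P pol h' (Suc k) s') = return_pmf ((s,a),s')" for a h' s'
  proof -
    have "map_pmf (\<lambda>r. ((s,a), fst (r ! 0))) (roll P pol h' (Suc k) s') =
          map_pmf (\<lambda>x. ((s,a),x)) (map_pmf (\<lambda>r. fst (r ! 0)) (roll P pol h' (Suc k) s'))"
      by (simp add: map_pmf_comp)
    also have "\<dots> = return_pmf ((s,a),s')" by (simp only: roll_hd_map) simp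
    finally show ?thesis .
  qed
  then show ?thesis
    by (simp add: map_bind_pmf map_pmf_comp bind_map_pmf bind_return_pmf map_pmf_def[symmetric])
qed




lemma pmf_map_cons:
  "pmf (map_pmf (\<lambda>r. x # r) M) e = (case e of [] \<Rightarrow> 0 | y # r \<Rightarrow> if y = x then pmf M r else 0)"
proof (cases e)
  case Nil
  then show ?thesis by (auto simp: pmf_eq_0_set_pmf)
next
  case (Cons y r)
  show ?thesis
  proof (cases "y = x")
    case True
    have "pmf (map_pmf ((#) x) M) (x # r) = pmf M r"
      by (rule pmf_map_inj') (auto simp: inj_def)
    then show ?thesis using Cons True by simp
  next
    case False
    then show ?thesis using Cons by (auto simp: pmf_eq_0_set_pmf)
  qed
qed

lemma roll_pmf_eq:
  assumes "\<And>i. i < length e \<Longrightarrow> P1 (h+i) (fst (e!i)) (snd (e!i)) = P2 (h+i) (fst (e!i)) (snd (e!i))"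
  shows "pmf (roll P1 pol h k s) e = pmf (roll P2 pol h k s) e"
  using assms
proof (induction k arbitrary: h s e)
  case 0
  then show ?case by simp
next
  case (Suc k)
  show ?case
  proof (cases e)
    case Nil
    then show ?thesis by (simp add: pmf_bind pmf_map_cons)
  next
    case (Cons y r)
    obtain s0 a0 where y: "y = (s0, a0)" by force
    have eq0: "P1 h s0 a0 = P2 h s0 a0" using Suc.prems[of 0] Cons y by simp
    have IH: "pmf (roll P1 pol (Suc h) k s') r = pmf (roll P2 pol (Suc h) k s') r" for s'
      by (rule Suc.IH) (use Suc.prems[of "Suc _"] Cons in auto)
    have "pmf (bind_pmf (P1 h s a) (\<lambda>s'. map_pmf ((#) (s, a)) (roll P1 pol (Suc h) k s'))) e =
          pmf (bind_pmf (P2 h s a) (\<lambda>s'. map_pmf ((#) (s, a)) (roll P2 pol (Suc h) k s'))) e" for a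
    proof (cases "(s,a) = (s0,a0)")
      case True
      then show ?thesis using Cons y eq0 IH by (simp add: pmf_bind pmf_map_cons)
    next
      case False
      then show ?thesis using Cons y by (auto simp add: pmf_bind pmf_map_cons)
    qed
    then show ?thesis by (simp add: pmf_bind)
  qed
qed

lemma pmf_snoc_bind:
  "pmf (bind_pmf M (\<lambda>D. map_pmf (\<lambda>e. D @ [e]) (R D))) (D0 @ [e0]) = pmf M D0 * pmf (R D0) e0"
proof -
  have "pmf (map_pmf (\<lambda>e. D @ [e]) (R D)) (D0 @ [e0]) = indicator {D0} D * pmf (R D0) e0" for D
  proof (cases "D = D0")
    case True
    have "pmf (map_pmf (\<lambda>e. D @ [e]) (R D)) (D @ [e0]) = pmf (R D) e0"
      by (rule pmf_map_inj') (auto simp: inj_def)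
    then show ?thesis using True by simp
  next
    case False
    then show ?thesis by (auto simp: pmf_eq_0_set_pmf)
  qed
  then have "pmf (bind_pmf M (\<lambda>D. map_pmf (\<lambda>e. D @ [e]) (R D))) (D0 @ [e0]) =
      measure_pmf.expectation M (\<lambda>D. indicator {D0} D * pmf (R D0) e0)"
    by (simp add: pmf_bind)
  also have "\<dots> = pmf M D0 * pmf (R D0) e0"
    by (simp add: measure_pmf_single)
  finally show ?thesis .
qed

lemma pmf_snoc_bind_Nil:
  "pmf (bind_pmf M (\<lambda>D. map_pmf (\<lambda>e. D @ [e]) (R D))) [] = 0"
proof -
  have "pmf (map_pmf (\<lambda>e. x @ [e]) (R x)) [] = 0" for x
    by (auto simp: pmf_eq_0_set_pmf)
  then show ?thesis by (simp add: pmf_bind)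
qed

lemma data_pmf_eq:
  assumes "\<And>pol e. Q e \<Longrightarrow> pmf (roll P1 pol 1 H s1) e = pmf (roll P2 pol 1 H s1) e"
  shows "\<forall>e\<in>set D. Q e \<Longrightarrow> pmf (data_pmf P1 s1 A H \<zeta> ora gsel t) D = pmf (data_pmf P2 s1 A H \<zeta> ora gsel t) D"
proof (induction t arbitrary: D)
  case 0
  then show ?case by simp
next
  case (Suc t)
  show ?case
  proof (cases D rule: rev_cases)
    case Nil
    then show ?thesis by (simp only: data_pmf.simps pmf_snoc_bind_Nil)
  next
    case (snoc D' e)
    have "pmf (data_pmf P1 s1 A H \<zeta> ora gsel t) D' = pmf (data_pmf P2 s1 A H \<zeta> ora gsel t) D'"
      using Suc snoc by auto
    moreover have "Q e" using Suc.prems snoc by auto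
    ultimately show ?thesis using snoc assms
      by (simp only: data_pmf.simps pmf_snoc_bind)
  qed
qed

lemma exp_eq_on:
  fixes f :: "'b \<Rightarrow> real"
  assumes "\<And>x. x \<in> G \<Longrightarrow> pmf M1 x = pmf M2 x"
  shows "measure_pmf.expectation M1 (\<lambda>x. indicator G x * f x) = measure_pmf.expectation M2 (\<lambda>x. indicator G x * f x)"
proof -
  have "measure_pmf.expectation M1 (\<lambda>x. indicator G x * f x) =
        integral\<^sup>L (count_space UNIV) (\<lambda>x. pmf M1 x *\<^sub>R (indicator G x * f x))"
    unfolding measure_pmf_eq_density by (subst integral_density) auto
  also have "\<dots> = integral\<^sup>L (count_space UNIV) (\<lambda>x. pmf M2 x *\<^sub>R (indicator G x * f x))"
    by (rule Bochner_Integration.integral_cong) (auto simp: assms indicator_def)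
  also have "\<dots> = measure_pmf.expectation M2 (\<lambda>x. indicator G x * f x)"
    unfolding measure_pmf_eq_density by (subst integral_density) auto
  finally show ?thesis .
qed




lemma pmf_sums1: "pmf (p :: nat pmf) sums 1"
  using sums_integral_count_space_nat[OF integrable_pmf[of UNIV p]] by (simp add: integral_pmf)

lemma low_rank_cls:
  fixes cls :: "nat \<Rightarrow> nat \<Rightarrow> nat" and d :: nat and K :: "nat \<Rightarrow> nat \<Rightarrow> nat pmf"
  assumes "\<And>s a. cls s a < d" "\<And>h s a. P h s a = K h (cls s a)"
  shows "low_rank P A H"
  unfolding low_rank_def low_rank_dim_def
  apply (rule exI[where x=d], rule exI[where x="\<lambda>s a i. if i = cls s a then (1::real) else 0"],
         rule exI[where x="\<lambda>h s' i. pmf (K h i) s'"])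
proof (intro conjI ballI allI impI)
  fix s a assume "a \<in> A"
  have "(\<Sum>i<d. (if i = cls s a then 1 else (0::real))\<^sup>2) = (\<Sum>i<d. (if i = cls s a then 1 else 0))"
    by (rule sum.cong) auto
  also have "\<dots> = 1" using assms(1)[of s a] by simp
  finally show "sqrt (\<Sum>i<d. (if i = cls s a then 1 else (0::real))\<^sup>2) \<le> 1" by simp
next
  fix h i assume "i < d"
  show "summable (\<lambda>s'. \<bar>pmf (K h i) s'\<bar>)" using pmf_sums1 by (auto simp: sums_iff)
next
  fix h assume "h \<in> {1..H}"
  have "(\<Sum>s'. \<bar>pmf (K h i) s'\<bar>) = 1" for i using pmf_sums1 by (auto simp: sums_iff)
  then show "sqrt (\<Sum>i<d. (\<Sum>s'. \<bar>pmf (K h i) s'\<bar>)\<^sup>2) \<le> sqrt (real d)" by simp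
next
  fix h s a s' assume "a \<in> A"
  have "(\<Sum>i<d. (if i = cls s a then 1 else 0) * pmf (K h i) s') = (\<Sum>i<d. (if i = cls s a then pmf (K h i) s' else 0))"
    by (rule sum.cong) auto
  also have "\<dots> = pmf (K h (cls s a)) s'" using assms(1)[of s a] by simp
  finally show "pmf (P h s a) s' = (\<Sum>i<d. (if i = cls s a then 1 else 0) * pmf (K h i) s')"
    using assms(2) by simp
qed

definition RR :: "nat \<Rightarrow> real" where "RR s = (if s = 3 then 1 else if s = 5 then 1/2 else 0)"

definition Pst :: "nat \<Rightarrow> real \<Rightarrow> nat \<Rightarrow> nat \<Rightarrow> nat pmf" where
 "Pst v q s a = (if s = 0 then pmf_of_set {1,2}
   else if s = 1 then (if a = 0 then return_pmf (if v = 1 then 3 else 4)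
                       else if a = 1 then return_pmf (if v = 2 then 3 else 4)
                       else return_pmf 5)
   else if s = 2 then (if v = 0 then return_pmf 4 else map_pmf (\<lambda>b. if b then 3 else 4) (bernoulli_pmf q))
   else return_pmf 4)"

definition dstep :: "nat \<Rightarrow> nat" where "dstep H = (if H = 2 then 1 else 2)"
definition qq :: "nat \<Rightarrow> real" where "qq H = 1 / 2^H"
definition PP :: "nat \<Rightarrow> nat \<Rightarrow> nat \<Rightarrow> nat \<Rightarrow> nat \<Rightarrow> nat pmf" where
  "PP H v h s a = (if h = dstep H then Pst v (qq H) s a else Pst 0 (qq H) s a)"
definition rw :: "nat \<Rightarrow> nat \<Rightarrow> nat \<Rightarrow> nat \<Rightarrow> real" where
  "rw H h s a = (if h = Suc (dstep H) then RR s else 0)"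
definition AA :: "nat \<Rightarrow> nat set" where "AA H = {0..<2^H}"
definition st1 :: "nat \<Rightarrow> nat" where "st1 H = (if H = 2 then 1 else 0)"
primrec fcs :: "nat \<Rightarrow> nat \<Rightarrow> (nat \<Rightarrow> nat \<Rightarrow> real) set" where
  "fcs H 0 = {bellman_op (PP H 1) (rw H) (AA H) H (\<lambda>_ _. 0)}"
| "fcs H (Suc m) = (\<lambda>(v,g). bellman_op (PP H v) (rw H) (AA H) (H - Suc m) g) ` ({0,1,2} \<times> fcs H m)"
definition FF :: "nat \<Rightarrow> nat \<Rightarrow> (nat \<Rightarrow> nat \<Rightarrow> real) set" where "FF H h = fcs H (H - h)"
definition BB :: "nat \<Rightarrow> real \<Rightarrow> nat \<Rightarrow> nat \<Rightarrow> real" where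
  "BB v q s a = measure_pmf.expectation (Pst v q s a) RR"

definition cls :: "nat \<Rightarrow> nat \<Rightarrow> nat" where
  "cls s a = (if s = 0 then 0 else if s = 1 then (if a = 0 then 1 else if a = 1 then 2 else 3) else if s = 2 then 4 else 5)"
definition rep :: "nat \<Rightarrow> nat \<times> nat" where
  "rep i = (if i = 0 then (0,0) else if i = 1 then (1,0) else if i = 2 then (1,1) else if i = 3 then (1,2) else if i = 4 then (2,0) else (3,0))"

lemma Pst_cls: "Pst v q s a = Pst v q (fst (rep (cls s a))) (snd (rep (cls s a)))"
  by (auto simp: Pst_def rep_def cls_def)

lemma PP_cls: "PP H v h s a = PP H v h (fst (rep (cls s a))) (snd (rep (cls s a)))"
  unfolding PP_def using Pst_cls by metis

lemma low_rank_PP: "low_rank (PP H v) A H"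
  by (rule low_rank_cls[where cls=cls and d=6 and K="\<lambda>h i. PP H v h (fst (rep i)) (snd (rep i))"])
     (simp add: cls_def, rule PP_cls)

lemma RR_bnd: "0 \<le> RR s" "RR s \<le> 1" by (auto simp: RR_def)

lemma BB_1: "BB v q 1 a = (if a = 0 then (if v = 1 then 1 else 0) else if a = 1 then (if v = 2 then 1 else 0) else 1/2)"
  by (auto simp: BB_def Pst_def RR_def)

lemma BB_2: "0 \<le> q \<Longrightarrow> q \<le> 1 \<Longrightarrow> BB v q 2 a = (if v = 0 then 0 else q)"
  by (auto simp: BB_def Pst_def RR_def)




lemma AA_fin: "finite (AA H)" and AA_ne: "AA H \<noteq> {}" and AA_012: "H \<ge> 2 \<Longrightarrow> {0,1,2} \<subseteq> AA H"
proof -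
  show "finite (AA H)" by (simp add: AA_def)
  show "AA H \<noteq> {}" by (simp add: AA_def)
  assume "H \<ge> 2"
  then have "(2::nat)^2 \<le> 2^H" by (rule power_increasing) auto
  then show "{0,1,2} \<subseteq> AA H" by (auto simp: AA_def)
qed

lemma rw_bnd: "0 \<le> rw H h s a" "rw H h s a \<le> 1"
  by (auto simp: rw_def RR_def)

lemma Max_const_img: "A \<noteq> {} \<Longrightarrow> finite A \<Longrightarrow> Max ((\<lambda>a. c) ` A) = c"
  by (simp add: image_constant_conv)

lemma bellman_zero: "A \<noteq> {} \<Longrightarrow> finite A \<Longrightarrow> bellman_op P r A h (\<lambda>_ _. 0) = (\<lambda>s a. r h s a)"
  by (auto simp: bellman_op_def Max_const_img fun_eq_iff)

lemma bellman_bnd: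
  assumes A: "finite A" "A \<noteq> {}" and r: "\<And>s a. 0 \<le> r h s a \<and> r h s a \<le> 1"
    and g: "\<And>s a. a \<in> A \<Longrightarrow> 0 \<le> g s a \<and> g s a \<le> B"
  shows "0 \<le> bellman_op P r A h g s a \<and> bellman_op P r A h g s a \<le> B + 1"
proof -
  have "0 \<le> Max ((\<lambda>a'. g s' a') ` A) \<and> Max ((\<lambda>a'. g s' a') ` A) \<le> B" for s'
  proof -
    obtain a0 where a0: "a0 \<in> A" using A by auto
    have "g s' a0 \<le> Max ((\<lambda>a'. g s' a') ` A)" using A a0 by (intro Max_ge) auto
    moreover have "Max ((\<lambda>a'. g s' a') ` A) \<in> (\<lambda>a'. g s' a') ` A" using A by (intro Max_in) auto
    ultimately show ?thesis using g a0 by fastforce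
  qed
  then have "0 \<le> measure_pmf.expectation (P h s a) (\<lambda>s'. Max ((\<lambda>a'. g s' a') ` A)) \<and>
     measure_pmf.expectation (P h s a) (\<lambda>s'. Max ((\<lambda>a'. g s' a') ` A)) \<le> B"
    by (intro exp_bounds) auto
  then show ?thesis using r[of s a] by (auto simp: bellman_op_def)
qed

lemma fcs_finite: "finite (fcs H m)"
  by (induction m) auto

lemma fcs_ne: "fcs H m \<noteq> {}"
  by (induction m) auto

lemma fcs_range: "f \<in> fcs H m \<Longrightarrow> a \<in> AA H \<Longrightarrow> 0 \<le> f s a \<and> f s a \<le> real m + 1"
proof (induction m arbitrary: f s a)
  case 0
  then show ?case using bellman_bnd[OF AA_fin AA_ne, where r="rw H" and h=H and g="\<lambda>_ _. 0" and B=0] rw_bnd by auto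
next
  case (Suc m)
  then obtain v g where g: "g \<in> fcs H m" and f: "f = bellman_op (PP H v) (rw H) (AA H) (H - Suc m) g"
    by auto
  show ?case unfolding f
    using bellman_bnd[OF AA_fin AA_ne, where r="rw H" and h="H - Suc m" and g=g and B="real m + 1"] rw_bnd Suc.IH[OF g] Suc.prems
    by auto
qed

lemma FF_props: "h \<in> {1..H} \<Longrightarrow> finite (FF H h) \<and> (\<forall>f\<in>FF H h. \<forall>s. \<forall>a\<in>AA H. 0 \<le> f s a \<and> f s a \<le> real H)"
proof -
  assume h: "h \<in> {1..H}"
  have hb: "real (H - h) + 1 \<le> real H" using h by auto
  have "\<forall>f\<in>FF H h. \<forall>s. \<forall>a\<in>AA H. 0 \<le> f s a \<and> f s a \<le> real H"
  proof (intro ballI allI)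
    fix f s a assume "f \<in> FF H h" "a \<in> AA H"
    then have "0 \<le> f s a \<and> f s a \<le> real (H - h) + 1" using fcs_range unfolding FF_def by blast
    then show "0 \<le> f s a \<and> f s a \<le> real H" using hb by linarith
  qed
  then show ?thesis by (simp add: FF_def fcs_finite)
qed

lemma bc: "v \<in> {0,1,2} \<Longrightarrow> bellman_complete (PP H v) (rw H) (AA H) H (FF H)"
  unfolding bellman_complete_def
proof (intro conjI ballI)
  assume v: "v \<in> {0,1,2}"
  fix h g assume h: "h \<in> {1..<H}" and g: "g \<in> FF H (Suc h)"
  have e: "H - h = Suc (H - Suc h)" "H - Suc (H - Suc h) = h" using h by auto
  have "bellman_op (PP H v) (rw H) (AA H) h g \<in> FF H h"
    using g v unfolding FF_def e(1) fcs.simps e(2) by (intro image_eqI[where x="(v,g)"]) auto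
  then show "\<exists>f\<in>FF H h. \<forall>s. \<forall>a\<in>AA H. f s a = bellman_op (PP H v) (rw H) (AA H) h g s a" by blast
next
  show "\<exists>f\<in>FF H H. \<forall>s. \<forall>a\<in>AA H. f s a = bellman_op (PP H v) (rw H) (AA H) H (\<lambda>_ _. 0) s a"
  proof
    show "bellman_op (PP H 1) (rw H) (AA H) H (\<lambda>_ _. 0) \<in> FF H H" by (simp add: FF_def)
    show "\<forall>s. \<forall>a\<in>AA H. bellman_op (PP H 1) (rw H) (AA H) H (\<lambda>_ _. 0) s a = bellman_op (PP H v) (rw H) (AA H) H (\<lambda>_ _. 0) s a"
      by (simp only: bellman_zero[OF AA_ne AA_fin]) simp
  qed
qed


lemma dstep3: "H \<ge> 3 \<Longrightarrow> dstep H = 2" by (simp add: dstep_def)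

lemma fcs_zero: "H \<ge> 3 \<Longrightarrow> m + 4 \<le> H \<Longrightarrow> f \<in> fcs H m \<Longrightarrow> f = (\<lambda>_ _. 0)"
proof (induction m arbitrary: f)
  case 0
  have "rw H H = (\<lambda>_ _. 0)" using 0 by (auto simp: rw_def dstep3 fun_eq_iff)
  then show ?case using 0 by (simp add: bellman_zero[OF AA_ne AA_fin])
next
  case (Suc m)
  then obtain v g where g: "g \<in> fcs H m" and f: "f = bellman_op (PP H v) (rw H) (AA H) (H - Suc m) g"
    by auto
  have g0: "g = (\<lambda>_ _. 0)" using Suc.IH[OF Suc.prems(1) _ g] Suc.prems(2) by simp
  have "rw H (H - Suc m) = (\<lambda>_ _. 0)" using Suc.prems by (auto simp: rw_def dstep3 fun_eq_iff)
  then show ?case unfolding f g0 by (simp add: bellman_zero[OF AA_ne AA_fin])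
qed

lemma fcs_3: "H \<ge> 3 \<Longrightarrow> f \<in> fcs H (H - 3) \<Longrightarrow> f = (\<lambda>s a. RR s)"
proof -
  assume H: "H \<ge> 3" and f: "f \<in> fcs H (H - 3)"
  have r3: "rw H 3 = (\<lambda>s a. RR s)" using H by (auto simp: rw_def dstep3 fun_eq_iff)
  show ?thesis
  proof (cases "H = 3")
    case True
    then show ?thesis using f r3 by (simp add: bellman_zero[OF AA_ne AA_fin])
  next
    case False
    then have e: "H - 3 = Suc (H - 4)" "H - Suc (H - 4) = 3" using H by auto
    from f obtain v g where g: "g \<in> fcs H (H - 4)" and f': "f = bellman_op (PP H v) (rw H) (AA H) 3 g"
      unfolding e(1) fcs.simps e(2) by auto
    have "g = (\<lambda>_ _. 0)" using fcs_zero[OF H _ g] H False by simp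
    then show ?thesis using f' r3 by (simp add: bellman_zero[OF AA_ne AA_fin])
  qed
qed

lemma RR3_in: "H \<ge> 3 \<Longrightarrow> (\<lambda>s a. RR s) \<in> fcs H (H - 3)"
  using fcs_3[of H] fcs_ne[of H "H - 3"] by auto

lemma bellman_RR: "H \<ge> 3 \<Longrightarrow> bellman_op (PP H v) (rw H) (AA H) 2 (\<lambda>s a. RR s) = (\<lambda>s a. BB v (qq H) s a)"
  by (auto simp: bellman_op_def rw_def dstep3 PP_def Max_const_img[OF AA_ne AA_fin] BB_def fun_eq_iff)

lemma fcs_2: "H \<ge> 3 \<Longrightarrow> f \<in> fcs H (H - 2) \<longleftrightarrow> (\<exists>v\<in>{0,1,2}. f = (\<lambda>s a. BB v (qq H) s a))"
proof -
  assume H: "H \<ge> 3"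
  have e: "H - 2 = Suc (H - 3)" "H - Suc (H - 3) = 2" using H by auto
  show ?thesis
  proof
    assume "f \<in> fcs H (H - 2)"
    then obtain v g where v: "v \<in> {0,1,2}" and g: "g \<in> fcs H (H - 3)" and f: "f = bellman_op (PP H v) (rw H) (AA H) 2 g"
      unfolding e(1) fcs.simps e(2) by auto
    have "g = (\<lambda>s a. RR s)" by (rule fcs_3[OF H g])
    then show "\<exists>v\<in>{0,1,2}. f = (\<lambda>s a. BB v (qq H) s a)" using f v bellman_RR[OF H] by auto
  next
    assume "\<exists>v\<in>{0,1,2}. f = (\<lambda>s a. BB v (qq H) s a)"
    then obtain v where v: "v \<in> {0,1,2}" and f: "f = (\<lambda>s a. BB v (qq H) s a)" by auto
    have "bellman_op (PP H v) (rw H) (AA H) 2 (\<lambda>s a. RR s) \<in> fcs H (H - 2)"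
      unfolding e(1) fcs.simps e(2) using v RR3_in[OF H] by (intro image_eqI[where x="(v, \<lambda>s a. RR s)"]) auto
    then show "f \<in> fcs H (H - 2)" using f bellman_RR[OF H] by simp
  qed
qed

lemma fitted_step: "1 \<le> h \<Longrightarrow> h < H \<Longrightarrow> fitted ora H D h = ora h D (fitted ora H D (Suc h))"
proof -
  assume "1 \<le> h" "h < H"
  then have e: "H - h = Suc (H - Suc h)" "H - Suc (H - Suc h) = h" by auto
  show ?thesis unfolding fitted_def e(1) fit_rev.simps e(2) ..
qed

lemma fitted_in:
  assumes ora: "is_reg_oracle r A H Fc ora"
  shows "1 \<le> h \<Longrightarrow> h \<le> H \<Longrightarrow> fitted ora H D h \<in> Fc h"
proof (induction "H - h" arbitrary: h)
  case 0
  then have "h = H" by auto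
  then show ?case using ora 0 by (auto simp: is_reg_oracle_def fitted_def)
next
  case (Suc m)
  then have "fitted ora H D h = ora h D (fitted ora H D (Suc h))" by (intro fitted_step) auto
  then show ?case using ora Suc.prems by (auto simp: is_reg_oracle_def)
qed




lemma exp_bounds_AE:
  fixes f :: "'b \<Rightarrow> real"
  assumes "\<And>x. x \<in> set_pmf M \<Longrightarrow> a \<le> f x \<and> f x \<le> b" "a \<le> b"
  shows "a \<le> measure_pmf.expectation M f \<and> measure_pmf.expectation M f \<le> b"
proof -
  have "measure_pmf.expectation M f = measure_pmf.expectation M (\<lambda>x. max a (min b (f x)))"
    using assms by (intro integral_cong_AE) (auto simp: AE_measure_pmf_iff)
  moreover have "a \<le> measure_pmf.expectation M (\<lambda>x. max a (min b (f x))) \<and> measure_pmf.expectation M (\<lambda>x. max a (min b (f x))) \<le> b"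
    using assms(2) by (intro exp_bounds) auto
  ultimately show ?thesis by simp
qed

lemma ep_return_bnd:
  assumes "\<And>h s a. 0 \<le> r h s a \<and> r h s a \<le> 1"
  shows "0 \<le> ep_return r e \<and> ep_return r e \<le> real (length e)"
proof -
  have "0 \<le> ep_return r e" unfolding ep_return_def by (intro sum_nonneg) (use assms in auto)
  moreover have "ep_return r e \<le> (\<Sum>i<length e. 1)" unfolding ep_return_def by (intro sum_mono) (use assms in auto)
  ultimately show ?thesis by simp
qed

lemma pol_value_bnd:
  assumes "\<And>h s a. 0 \<le> r h s a \<and> r h s a \<le> 1"
  shows "0 \<le> pol_value P r s1 H pol \<and> pol_value P r s1 H pol \<le> real H"
  unfolding pol_value_def
  by (rule exp_bounds_AE) (use ep_return_bnd[OF assms] roll_len in fastforce)+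

lemma exp_roll_pair:
  fixes \<Psi> :: "nat \<times> nat \<Rightarrow> nat \<Rightarrow> real"
  assumes "\<And>p s. \<bar>\<Psi> p s\<bar> \<le> B"
  shows "measure_pmf.expectation (roll P pol h (Suc (Suc k)) s) (\<lambda>e. \<Psi> (e!0) (fst (e!1))) =
         measure_pmf.expectation (pol h s) (\<lambda>a. measure_pmf.expectation (P h s a) (\<lambda>s'. \<Psi> (s,a) s'))"
proof -
  have "measure_pmf.expectation (roll P pol h (Suc (Suc k)) s) (\<lambda>e. \<Psi> (e!0) (fst (e!1))) =
        measure_pmf.expectation (map_pmf (\<lambda>e. (e ! 0, fst (e ! 1))) (roll P pol h (Suc (Suc k)) s)) (\<lambda>(p,s'). \<Psi> p s')"
    by simp
  also have "\<dots> = measure_pmf.expectation (bind_pmf (pol h s) (\<lambda>a. map_pmf (\<lambda>s'. ((s, a), s')) (P h s a))) (\<lambda>(p,s'). \<Psi> p s')"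
    by (simp only: roll_pair)
  also have "\<dots> = measure_pmf.expectation (pol h s) (\<lambda>a. measure_pmf.expectation (P h s a) (\<lambda>s'. \<Psi> (s,a) s'))"
    by (subst int_bind_pmf[where B=B]) (use assms in auto)
  finally show ?thesis .
qed

lemma exp_roll_tri:
  fixes \<Phi> :: "nat \<Rightarrow> nat \<Rightarrow> nat \<Rightarrow> real"
  assumes B: "\<And>x y z. \<bar>\<Phi> x y z\<bar> \<le> B" and H: "H \<ge> 3"
  shows "measure_pmf.expectation (roll (PP H v) pol 1 H 0) (\<lambda>e. \<Phi> (fst (e!1)) (snd (e!1)) (fst (e!2))) =
     (measure_pmf.expectation (pol 2 1) (\<lambda>a. measure_pmf.expectation (Pst v (qq H) 1 a) (\<Phi> 1 a)) +
      measure_pmf.expectation (pol 2 2) (\<lambda>a. measure_pmf.expectation (Pst v (qq H) 2 a) (\<Phi> 2 a))) / 2"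
proof -
  define k where "k = H - 3"
  have k: "H = Suc (Suc (Suc k))" using H by (simp add: k_def)
  let ?f = "\<lambda>e::(nat\<times>nat) list. \<Phi> (fst (e!1)) (snd (e!1)) (fst (e!2))"
  let ?X = "\<lambda>s'. measure_pmf.expectation (pol 2 s') (\<lambda>a. measure_pmf.expectation (Pst v (qq H) s' a) (\<Phi> s' a))"
  have P1: "PP H v 1 0 a = pmf_of_set {1,2}" for a using H by (simp add: PP_def dstep_def Pst_def)
  have P2: "PP H v 2 s a = Pst v (qq H) s a" for s a using H by (simp add: PP_def dstep_def)
  have inner: "measure_pmf.expectation (map_pmf ((#) (0,a)) (roll (PP H v) pol 2 (Suc (Suc k)) s')) ?f = ?X s'" for a s'
  proof -
    have "measure_pmf.expectation (map_pmf ((#) (0,a)) (roll (PP H v) pol 2 (Suc (Suc k)) s')) ?f =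
          measure_pmf.expectation (roll (PP H v) pol 2 (Suc (Suc k)) s') (\<lambda>e. (\<lambda>p s''. \<Phi> (fst p) (snd p) s'') (e!0) (fst (e!1)))"
      by simp
    also have "\<dots> = ?X s'"
      by (subst exp_roll_pair[where B=B]) (use B in \<open>auto simp: P2\<close>)
    finally show ?thesis .
  qed
  have "measure_pmf.expectation (roll (PP H v) pol 1 H 0) ?f =
        measure_pmf.expectation (pol 1 0) (\<lambda>a. measure_pmf.expectation (bind_pmf (PP H v 1 0 a)
           (\<lambda>s'. map_pmf ((#) (0,a)) (roll (PP H v) pol 2 (Suc (Suc k)) s'))) ?f)"
  proof -
    have "roll (PP H v) pol 1 H 0 = bind_pmf (pol 1 0) (\<lambda>a. bind_pmf (PP H v 1 0 a)
           (\<lambda>s'. map_pmf ((#) (0,a)) (roll (PP H v) pol 2 (Suc (Suc k)) s')))"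
      unfolding k by (subst roll.simps(2)) (simp only: Suc_1)
    then show ?thesis by (simp only:) (rule int_bind_pmf[where B=B], rule B)
  qed
  also have "\<dots> = measure_pmf.expectation (pol 1 0) (\<lambda>a. measure_pmf.expectation (pmf_of_set {1,2}) ?X)"
    by (simp only: P1 int_bind_pmf[where B=B, OF B] inner)
  also have "\<dots> = (?X 1 + ?X 2) / 2"
    by (simp add: integral_pmf_of_set)
  finally show ?thesis by simp
qed

lemma exp_roll_H2:
  fixes \<Phi> :: "nat \<Rightarrow> real"
  assumes B: "\<And>x. \<bar>\<Phi> x\<bar> \<le> B"
  shows "measure_pmf.expectation (roll (PP 2 v) pol 1 2 1) (\<lambda>e. \<Phi> (fst (e!1))) =
     measure_pmf.expectation (pol 1 1) (\<lambda>a. measure_pmf.expectation (Pst v (qq 2) 1 a) \<Phi>)"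
proof -
  have "measure_pmf.expectation (roll (PP 2 v) pol 1 2 1) (\<lambda>e. \<Phi> (fst (e!1))) =
        measure_pmf.expectation (roll (PP 2 v) pol 1 (Suc (Suc 0)) 1) (\<lambda>e. (\<lambda>p s. \<Phi> s) (e!0) (fst (e!1)))"
    by (simp add: numeral_2_eq_2)
  also have "\<dots> = measure_pmf.expectation (pol 1 1) (\<lambda>a. measure_pmf.expectation (PP 2 v 1 1 a) \<Phi>)"
    by (subst exp_roll_pair[where B=B]) (use B in auto)
  finally show ?thesis by (simp add: PP_def dstep_def)
qed




lemma ep_return_3: "H \<ge> 3 \<Longrightarrow> length e = H \<Longrightarrow> ep_return (rw H) e = RR (fst (e!2))"
proof -
  assume H: "H \<ge> 3" and l: "length e = H"
  have "ep_return (rw H) e = (\<Sum>i<H. if i = 2 then RR (fst (e!i)) else 0)"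
    unfolding ep_return_def l using H by (intro sum.cong) (auto simp: rw_def dstep3)
  also have "\<dots> = RR (fst (e!2))" using H by simp
  finally show ?thesis .
qed

lemma ep_return_2: "length e = 2 \<Longrightarrow> ep_return (rw 2) e = RR (fst (e!1))"
proof -
  assume l: "length e = 2"
  have "ep_return (rw 2) e = (\<Sum>i<2. if i = 1 then RR (fst (e!i)) else 0)"
    unfolding ep_return_def l by (intro sum.cong) (auto simp: rw_def dstep_def)
  also have "\<dots> = RR (fst (e!1))" by simp
  finally show ?thesis .
qed

lemma RR_abs: "\<bar>RR s\<bar> \<le> 1" using RR_bnd[of s] by simp

lemma BB_abs: "\<bar>BB v q s a\<bar> \<le> 1"
  using exp_bounds[of 0 RR 1 "Pst v q s a"] RR_bnd unfolding BB_def by auto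

lemma pol_value_3: "H \<ge> 3 \<Longrightarrow> pol_value (PP H v) (rw H) 0 H pol =
   (measure_pmf.expectation (pol 2 1) (\<lambda>a. BB v (qq H) 1 a) + measure_pmf.expectation (pol 2 2) (\<lambda>a. BB v (qq H) 2 a)) / 2"
proof -
  assume H: "H \<ge> 3"
  have "pol_value (PP H v) (rw H) 0 H pol = measure_pmf.expectation (roll (PP H v) pol 1 H 0) (\<lambda>e. (\<lambda>x y z. RR z) (fst (e!1)) (snd (e!1)) (fst (e!2)))"
    unfolding pol_value_def using H roll_len
    by (intro integral_cong_AE) (auto simp: AE_measure_pmf_iff ep_return_3)
  also have "\<dots> = (measure_pmf.expectation (pol 2 1) (\<lambda>a. measure_pmf.expectation (Pst v (qq H) 1 a) (\<lambda>z. RR z)) +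
      measure_pmf.expectation (pol 2 2) (\<lambda>a. measure_pmf.expectation (Pst v (qq H) 2 a) (\<lambda>z. RR z))) / 2"
    by (rule exp_roll_tri[where B=1, OF RR_abs H])
  finally show ?thesis by (simp only: BB_def)
qed

lemma pol_value_2: "pol_value (PP 2 v) (rw 2) 1 2 pol = measure_pmf.expectation (pol 1 1) (\<lambda>a. BB v (qq 2) 1 a)"
proof -
  have "pol_value (PP 2 v) (rw 2) 1 2 pol = measure_pmf.expectation (roll (PP 2 v) pol 1 2 1) (\<lambda>e. RR (fst (e!1)))"
    unfolding pol_value_def using roll_len
    by (intro integral_cong_AE) (auto simp: AA_def AE_measure_pmf_iff ep_return_2)
  also have "\<dots> = measure_pmf.expectation (pol 1 1) (\<lambda>a. measure_pmf.expectation (Pst v (qq 2) 1 a) RR)"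
    by (rule exp_roll_H2[where B=1, OF RR_abs])
  finally show ?thesis by (simp only: BB_def)
qed

lemma qq_bnd: "0 \<le> qq H" "qq H \<le> 1" by (auto simp: qq_def)

lemma BB12: "BB 1 q 1 a + BB 2 q 1 a = 1" by (auto simp: BB_def Pst_def RR_def)

lemma exp_sum_BB: "measure_pmf.expectation M (\<lambda>a. BB 1 q 1 a) + measure_pmf.expectation M (\<lambda>a. BB 2 q 1 a) = 1"
proof -
  have "measure_pmf.expectation M (\<lambda>a. BB 1 q 1 a) + measure_pmf.expectation M (\<lambda>a. BB 2 q 1 a) =
        measure_pmf.expectation M (\<lambda>a. BB 1 q 1 a + BB 2 q 1 a)"
  proof (rule Bochner_Integration.integral_add[symmetric])
    show "integrable (measure_pmf M) (\<lambda>a. BB 1 q 1 a)" by (rule integrable_bnd[where B=1], rule BB_abs)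
    show "integrable (measure_pmf M) (\<lambda>a. BB 2 q 1 a)" by (rule integrable_bnd[where B=1], rule BB_abs)
  qed
  then show ?thesis by (simp only: BB12) simp
qed

definition Vv :: "nat \<Rightarrow> nat \<Rightarrow> (nat \<Rightarrow> nat \<Rightarrow> nat pmf) \<Rightarrow> real" where
  "Vv H v pol = pol_value (PP H v) (rw H) (st1 H) H pol"

lemma V_sum: "H \<ge> 2 \<Longrightarrow> Vv H 1 pol + Vv H 2 pol \<le> (if H = 2 then 1 else 1/2 + qq H)"
proof (cases "H = 2")
  case True
  have st: "st1 2 = 1" by (simp add: st1_def)
  have "Vv H 1 pol + Vv H 2 pol = 1" unfolding Vv_def st True pol_value_2 by (rule exp_sum_BB)
  then show ?thesis using True by simp
next
  case False
  assume "H \<ge> 2"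
  then have H: "H \<ge> 3" using False by auto
  have st: "st1 H = 0" using H by (simp add: st1_def)
  have b2: "measure_pmf.expectation (pol 2 2) (\<lambda>a. BB v (qq H) 2 a) = (if v = 0 then 0 else qq H)" for v
    using qq_bnd[of H] by (simp only: BB_2) simp
  have "Vv H 1 pol + Vv H 2 pol = (measure_pmf.expectation (pol 2 1) (\<lambda>a. BB 1 (qq H) 1 a) + measure_pmf.expectation (pol 2 1) (\<lambda>a. BB 2 (qq H) 1 a) + 2 * qq H) / 2"
    unfolding Vv_def st pol_value_3[OF H] b2 using H by (simp add: field_simps)
  also have "\<dots> = (1 + 2 * qq H) / 2" by (simp only: exp_sum_BB)
  finally show ?thesis using H by simp
qed

lemma V_opt: "H \<ge> 2 \<Longrightarrow> v \<in> {1,2} \<Longrightarrow> Vv H v (\<lambda>h s. return_pmf (v - 1)) \<ge> (if H = 2 then 1 else 1/2 + qq H / 2)"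
proof (cases "H = 2")
  case True
  assume "v \<in> {1,2}"
  then have "Vv H v (\<lambda>h s. return_pmf (v - 1)) = 1"
  proof -
    have st: "st1 2 = 1" by (simp add: st1_def)
    show ?thesis unfolding Vv_def st True pol_value_2 using \<open>v \<in> {1,2}\<close> by (auto simp: BB_def Pst_def RR_def)
  qed
  then show ?thesis using True by simp
next
  case False
  assume "H \<ge> 2" "v \<in> {1,2}"
  then have H: "H \<ge> 3" using False by auto
  have st: "st1 H = 0" using H by (simp add: st1_def)
  have "Vv H v (\<lambda>h s. return_pmf (v - 1)) = (BB v (qq H) 1 (v - 1) + BB v (qq H) 2 (v - 1)) / 2"
    unfolding Vv_def st pol_value_3[OF H] by simp
  also have "\<dots> = (1 + qq H) / 2" using \<open>v \<in> {1,2}\<close> qq_bnd[of H] by (auto simp: BB_def Pst_def RR_def)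
  finally show ?thesis using H by simp
qed

lemma opt_ge: "H \<ge> 2 \<Longrightarrow> v \<in> {1,2} \<Longrightarrow> opt_value (PP H v) (rw H) (st1 H) H (AA H) \<ge> (if H = 2 then 1 else 1/2 + qq H / 2)"
proof -
  assume H: "H \<ge> 2" and v: "v \<in> {1,2}"
  let ?S = "{pol. \<forall>h s. set_pmf (pol h s) \<subseteq> AA H}"
  have mem: "(\<lambda>h s. return_pmf (v - 1)) \<in> ?S" using v AA_012[OF H] by auto
  have bdd: "bdd_above ((\<lambda>pol. pol_value (PP H v) (rw H) (st1 H) H pol) ` ?S)"
    using pol_value_bnd[of "rw H"] rw_bnd by (intro bdd_aboveI[where M="real H"]) fastforce
  have "Vv H v (\<lambda>h s. return_pmf (v - 1)) \<le> opt_value (PP H v) (rw H) (st1 H) H (AA H)"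
    unfolding Vv_def opt_value_def by (rule cSUP_upper[OF mem bdd])
  then show ?thesis using V_opt[OF H v] by linarith
qed

lemma subopt_props:
  assumes H: "H \<ge> 2" and v: "v \<in> {1,2}" and pol: "\<forall>h s. set_pmf (pol h s) \<subseteq> AA H"
  shows "0 \<le> opt_value (PP H v) (rw H) (st1 H) H (AA H) - Vv H v pol"
    "opt_value (PP H v) (rw H) (st1 H) H (AA H) - Vv H v pol \<le> real H"
proof -
  let ?S = "{pol. \<forall>h s. set_pmf (pol h s) \<subseteq> AA H}"
  have bdd: "bdd_above ((\<lambda>pol. pol_value (PP H v) (rw H) (st1 H) H pol) ` ?S)"
    using pol_value_bnd[of "rw H"] rw_bnd by (intro bdd_aboveI[where M="real H"]) fastforce
  have "Vv H v pol \<le> opt_value (PP H v) (rw H) (st1 H) H (AA H)"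
    unfolding Vv_def opt_value_def by (rule cSUP_upper[OF _ bdd]) (use pol in auto)
  then show "0 \<le> opt_value (PP H v) (rw H) (st1 H) H (AA H) - Vv H v pol" by simp
  have "opt_value (PP H v) (rw H) (st1 H) H (AA H) \<le> real H"
    unfolding opt_value_def
    by (rule cSUP_least) (use pol_value_bnd[of "rw H"] rw_bnd in \<open>auto intro!: exI[where x="\<lambda>h s. return_pmf 0"] simp: AA_def\<close>)
  moreover have "0 \<le> Vv H v pol" unfolding Vv_def using pol_value_bnd[of "rw H"] rw_bnd by blast
  ultimately show "opt_value (PP H v) (rw H) (st1 H) H (AA H) - Vv H v pol \<le> real H" by simp
qed

lemma subopt_sum:
  assumes H: "H \<ge> 2"
  shows "opt_value (PP H 1) (rw H) (st1 H) H (AA H) - Vv H 1 pol + (opt_value (PP H 2) (rw H) (st1 H) H (AA H) - Vv H 2 pol) \<ge> 1/2"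
proof -
  have a: "(if H = 2 then 1 else 1/2 + qq H / 2) \<le> opt_value (PP H 1) (rw H) (st1 H) H (AA H)" by (rule opt_ge[OF H]) simp
  have b: "(if H = 2 then 1 else 1/2 + qq H / 2) \<le> opt_value (PP H 2) (rw H) (st1 H) H (AA H)" by (rule opt_ge[OF H]) simp
  have c: "Vv H 1 pol + Vv H 2 pol \<le> (if H = 2 then 1 else 1/2 + qq H)" by (rule V_sum[OF H])
  show ?thesis
  proof (cases "H = 2")
    case True
    then have "1 \<le> opt_value (PP H 1) (rw H) (st1 H) H (AA H)" "1 \<le> opt_value (PP H 2) (rw H) (st1 H) H (AA H)"
      "Vv H 1 pol + Vv H 2 pol \<le> 1" using a b c by simp_all
    then show ?thesis by linarith
  next
    case False
    then have "1/2 + qq H / 2 \<le> opt_value (PP H 1) (rw H) (st1 H) H (AA H)" "1/2 + qq H / 2 \<le> opt_value (PP H 2) (rw H) (st1 H) H (AA H)"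
      "Vv H 1 pol + Vv H 2 pol \<le> 1/2 + qq H" using a b c by simp_all
    then show ?thesis by linarith
  qed
qed




definition okE :: "(nat \<times> nat) list \<Rightarrow> bool" where
  "okE e \<longleftrightarrow> (fst (e!1) = 1 \<and> snd (e!1) \<notin> {0,1}) \<or> (fst (e!1) = 2 \<and> fst (e!2) = 4)"
definition calE :: "(nat \<times> nat) list \<Rightarrow> bool" where
  "calE e \<longleftrightarrow> fst (e!1) = 2"
definition GG :: "(nat \<times> nat) list list set" where "GG = {D. \<forall>e\<in>set D. okE e}"
definition GG' :: "(nat \<times> nat) list list set" where "GG' = {D. D \<noteq> [] \<and> (\<forall>e\<in>set D. okE e) \<and> calE (hd D)}"

lemma BB_1s: "BB v q (Suc 0) a = (if a = 0 then (if v = Suc 0 then 1 else 0) else if a = Suc 0 then (if v = 2 then 1 else 0) else 1/2)"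
  by (auto simp: BB_def Pst_def RR_def)

lemma sum_list_strict:
  fixes f g :: "'a \<Rightarrow> real"
  shows "(\<forall>x\<in>set xs. f x \<le> g x) \<Longrightarrow> (\<exists>x\<in>set xs. f x < g x) \<Longrightarrow> sum_list (map f xs) < sum_list (map g xs)"
proof (induction xs)
  case Nil
  then show ?case by simp
next
  case (Cons a xs)
  show ?case
  proof (cases "f a < g a")
    case True
    have "sum_list (map f xs) \<le> sum_list (map g xs)"
      using Cons.prems(1) by (intro sum_list_mono) auto
    then show ?thesis using True by simp
  next
    case False
    then have "\<exists>x\<in>set xs. f x < g x" using Cons.prems(2) by auto
    then have "sum_list (map f xs) < sum_list (map g xs)" using Cons by auto
    then show ?thesis using Cons.prems(1) by simp
  qed
qed

lemma sq_loss_BB: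
  assumes H: "H \<ge> 3"
  shows "sq_loss (rw H) (AA H) 2 (\<lambda>s a. BB v (qq H) s a) (\<lambda>s a. RR s) D =
         sum_list (map (\<lambda>ep. (BB v (qq H) (fst (ep!1)) (snd (ep!1)) - RR (fst (ep!2)))\<^sup>2) D)"
  unfolding sq_loss_def using H by (simp add: rw_def dstep3 Max_const_img[OF AA_ne AA_fin])

lemma regress:
  assumes H: "H \<ge> 3" and ora: "is_reg_oracle (rw H) (AA H) H (FF H) ora" and D: "D \<in> GG'"
  shows "fitted ora H D 2 = (\<lambda>s a. BB 0 (qq H) s a)"
proof -
  have f3: "fitted ora H D 3 = (\<lambda>s a. RR s)"
    using fitted_in[OF ora, of 3 D] H fcs_3[OF H] unfolding FF_def by auto
  have f2: "fitted ora H D 2 = ora 2 D (\<lambda>s a. RR s)"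
    using fitted_step[of 2 H ora D] H f3 by (simp add: numeral_3_eq_3)
  have mem: "ora 2 D (\<lambda>s a. RR s) \<in> fcs H (H - 2)" and
    minl: "\<And>f. f \<in> fcs H (H - 2) \<Longrightarrow> sq_loss (rw H) (AA H) 2 (ora 2 D (\<lambda>s a. RR s)) (\<lambda>s a. RR s) D \<le> sq_loss (rw H) (AA H) 2 f (\<lambda>s a. RR s) D"
    using ora H unfolding is_reg_oracle_def FF_def by auto
  obtain v where v: "v \<in> {0,1,2}" and m: "ora 2 D (\<lambda>s a. RR s) = (\<lambda>s a. BB v (qq H) s a)"
    using mem fcs_2[OF H] by auto
  have F0: "(\<lambda>s a. BB 0 (qq H) s a) \<in> fcs H (H - 2)" using fcs_2[OF H] by auto
  have "v = 0"
  proof (rule ccontr)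
    assume "v \<noteq> 0"
    then have v12: "v \<noteq> 0" by simp
    have q: "0 < qq H" "qq H \<le> 1" by (auto simp: qq_def)
    have le: "\<forall>ep\<in>set D. (BB 0 (qq H) (fst (ep!1)) (snd (ep!1)) - RR (fst (ep!2)))\<^sup>2 \<le> (BB v (qq H) (fst (ep!1)) (snd (ep!1)) - RR (fst (ep!2)))\<^sup>2"
    proof
      fix ep assume "ep \<in> set D"
      then have "okE ep" using D by (auto simp: GG'_def)
      then show "(BB 0 (qq H) (fst (ep!1)) (snd (ep!1)) - RR (fst (ep!2)))\<^sup>2 \<le> (BB v (qq H) (fst (ep!1)) (snd (ep!1)) - RR (fst (ep!2)))\<^sup>2"
        using q v12 by (auto simp: okE_def BB_1s BB_2 RR_def)
    qed
    have lt: "\<exists>ep\<in>set D. (BB 0 (qq H) (fst (ep!1)) (snd (ep!1)) - RR (fst (ep!2)))\<^sup>2 < (BB v (qq H) (fst (ep!1)) (snd (ep!1)) - RR (fst (ep!2)))\<^sup>2"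
    proof
      show "hd D \<in> set D" using D by (auto simp: GG'_def)
      have "okE (hd D)" "calE (hd D)" using D \<open>hd D \<in> set D\<close> by (auto simp: GG'_def)
      then show "(BB 0 (qq H) (fst (hd D!1)) (snd (hd D!1)) - RR (fst (hd D!2)))\<^sup>2 < (BB v (qq H) (fst (hd D!1)) (snd (hd D!1)) - RR (fst (hd D!2)))\<^sup>2"
        using q v12 by (auto simp: okE_def calE_def BB_2 RR_def)
    qed
    have "sq_loss (rw H) (AA H) 2 (\<lambda>s a. BB 0 (qq H) s a) (\<lambda>s a. RR s) D < sq_loss (rw H) (AA H) 2 (\<lambda>s a. BB v (qq H) s a) (\<lambda>s a. RR s) D"
      unfolding sq_loss_BB[OF H] by (rule sum_list_strict[OF le lt])
    then show False using minl[OF F0] m by simp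
  qed
  then show ?thesis using f2 m by simp
qed

lemma greedy_BB0:
  assumes g: "is_greedy_sel (AA H) gsel" and H: "H \<ge> 2"
  shows "gsel h (\<lambda>s a. BB 0 q s a) 1 \<in> AA H" "gsel h (\<lambda>s a. BB 0 q s a) 1 \<notin> {0,1}"
proof -
  let ?a = "gsel h (\<lambda>s a. BB 0 q s a) 1"
  show "?a \<in> AA H" using g by (simp add: is_greedy_sel_def)
  have "BB 0 q 1 2 \<le> BB 0 q 1 ?a" using g AA_012[OF H] by (simp add: is_greedy_sel_def)
  then show "?a \<notin> {0,1}" by (auto simp: BB_1s split: if_splits)
qed




lemma card_AA: "card (AA H) = 2^H" by (simp add: AA_def)

lemma act_exp:
  assumes z: "0 \<le> \<zeta>" "\<zeta> \<le> 1" and a0: "a0 \<notin> {0,1}" and H: "H \<ge> 2"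
  shows "measure_pmf.expectation (act_pmf \<zeta> (AA H) a0) (\<lambda>a. if a \<notin> {0,1} then 1 else (0::real)) \<ge> 1 - 2 / 2^H"
proof -
  have s: "(\<Sum>a\<in>AA H. if a \<notin> {0,1} then 1 else (0::real)) = real (card (AA H - {0,1}))"
  proof -
    have "(\<Sum>a\<in>AA H. if a \<notin> {0,1} then 1 else (0::real)) = (\<Sum>a\<in>{a\<in>AA H. a \<notin> {0,1}}. 1)"
      by (rule sum.inter_filter[symmetric]) (rule AA_fin)
    also have "{a\<in>AA H. a \<notin> {0,1}} = AA H - {0,1}" by auto
    finally show ?thesis by simp
  qed
  have c: "card (AA H - {0,1}) = 2^H - 2" using AA_012[OF H] AA_fin by (simp add: card_Diff_subset card_AA)
  have N: "(4::real) \<le> 2^H"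
  proof -
    have "(2::real)^2 \<le> 2^H" by (rule power_increasing) (use H in auto)
    then show ?thesis by simp
  qed
  have N': "(2::nat) \<le> 2^H"
  proof -
    have "(2::nat)^1 \<le> 2^H" by (rule power_increasing) (use H in auto)
    then show ?thesis by simp
  qed
  have "measure_pmf.expectation (act_pmf \<zeta> (AA H) a0) (\<lambda>a. if a \<notin> {0,1} then 1 else (0::real)) =
        \<zeta> * measure_pmf.expectation (pmf_of_set (AA H)) (\<lambda>a. if a \<notin> {0,1} then 1 else (0::real)) + (1 - \<zeta>)"
    unfolding act_pmf_def using z a0 by (subst int_bind_pmf[where B=1]) auto
  also have "measure_pmf.expectation (pmf_of_set (AA H)) (\<lambda>a. if a \<notin> {0,1} then 1 else (0::real)) = (2^H - 2) / 2^H"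
  proof -
    have "measure_pmf.expectation (pmf_of_set (AA H)) (\<lambda>a. if a \<notin> {0,1} then 1 else (0::real)) =
      (\<Sum>a\<in>AA H. if a \<notin> {0,1} then 1 else (0::real)) / card (AA H)"
      by (rule integral_pmf_of_set[OF AA_ne AA_fin])
    also have "\<dots> = real (2^H - 2) / 2^H" by (simp only: s c card_AA) simp
    also have "\<dots> = (2^H - 2) / 2^H" using N' by (simp add: of_nat_diff)
    finally show ?thesis .
  qed
  finally have e: "measure_pmf.expectation (act_pmf \<zeta> (AA H) a0) (\<lambda>a. if a \<notin> {0,1} then 1 else (0::real)) = \<zeta> * ((2^H - 2) / 2^H) + (1 - \<zeta>)" .
  have "\<zeta> * ((2^H - 2) / 2^H) + (1 - \<zeta>) = 1 - \<zeta> * (2 / 2^H)" using N by (simp add: field_simps)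
  also have "\<dots> \<ge> 1 - 2 / 2^H"
  proof -
    have "\<zeta> * (2 / 2^H) \<le> 1 * (2 / 2^H)" using z by (intro mult_right_mono) auto
    then show ?thesis by simp
  qed
  finally show ?thesis using e by simp
qed




lemma cal_exp: "0 \<le> q \<Longrightarrow> q \<le> 1 \<Longrightarrow> measure_pmf.expectation (Pst 1 q 2 a) (\<lambda>z. if z = 4 then 1 else (0::real)) = 1 - q"
  by (simp add: Pst_def)

lemma ep_good:
  assumes H: "H \<ge> 3" and z: "0 \<le> \<zeta>" "\<zeta> \<le> 1" and a0: "a0 \<notin> {0,1}"
    and pol: "pol 2 1 = act_pmf \<zeta> (AA H) a0"
  shows "measure_pmf.expectation (roll (PP H 1) pol 1 H 0) (\<lambda>e. if okE e then 1 else (0::real)) \<ge> 1 - 3 / (2 * 2^H)"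
proof -
  let ?\<Phi> = "\<lambda>(x::nat) (y::nat) (z::nat). if (x = 1 \<and> y \<notin> {0,1}) \<or> (x = 2 \<and> z = 4) then 1 else (0::real)"
  have "measure_pmf.expectation (roll (PP H 1) pol 1 H 0) (\<lambda>e. if okE e then 1 else (0::real)) =
        measure_pmf.expectation (roll (PP H 1) pol 1 H 0) (\<lambda>e. ?\<Phi> (fst (e!1)) (snd (e!1)) (fst (e!2)))"
    by (simp add: okE_def)
  also have "\<dots> = (measure_pmf.expectation (pol 2 1) (\<lambda>a. measure_pmf.expectation (Pst 1 (qq H) 1 a) (?\<Phi> 1 a)) +
      measure_pmf.expectation (pol 2 2) (\<lambda>a. measure_pmf.expectation (Pst 1 (qq H) 2 a) (?\<Phi> 2 a))) / 2"
    by (rule exp_roll_tri[where B=1, OF _ H]) simp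
  also have "\<dots> = (measure_pmf.expectation (act_pmf \<zeta> (AA H) a0) (\<lambda>a. if a \<notin> {0,1} then 1 else (0::real)) + (1 - qq H)) / 2"
  proof -
    have "(\<lambda>a. measure_pmf.expectation (Pst 1 (qq H) 1 a) (?\<Phi> 1 a)) = (\<lambda>a. if a \<notin> {0,1} then 1 else (0::real))"
      by auto
    moreover have "(\<lambda>a. measure_pmf.expectation (Pst 1 (qq H) 2 a) (?\<Phi> 2 a)) = (\<lambda>a. 1 - qq H)"
      using cal_exp[OF qq_bnd] by auto
    ultimately show ?thesis using pol by simp
  qed
  also have "\<dots> \<ge> ((1 - 2 / 2^H) + (1 - qq H)) / 2"
    using act_exp[OF z a0, of H] H by simp
  also have "((1 - 2 / 2^H) + (1 - qq H)) / 2 = 1 - 3 / (2 * 2^H)"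
    by (simp add: qq_def field_simps)
  finally show ?thesis .
qed

lemma ep_first:
  assumes H: "H \<ge> 3"
  shows "measure_pmf.expectation (roll (PP H 1) pol 1 H 0) (\<lambda>e. if okE e \<and> calE e then 1 else (0::real)) = (1 - qq H) / 2"
proof -
  let ?\<Phi> = "\<lambda>(x::nat) (y::nat) (z::nat). if x = 2 \<and> z = 4 then 1 else (0::real)"
  have "measure_pmf.expectation (roll (PP H 1) pol 1 H 0) (\<lambda>e. if okE e \<and> calE e then 1 else (0::real)) =
        measure_pmf.expectation (roll (PP H 1) pol 1 H 0) (\<lambda>e. ?\<Phi> (fst (e!1)) (snd (e!1)) (fst (e!2)))"
    by (rule Bochner_Integration.integral_cong) (auto simp: okE_def calE_def)
  also have "\<dots> = (measure_pmf.expectation (pol 2 1) (\<lambda>a. measure_pmf.expectation (Pst 1 (qq H) 1 a) (?\<Phi> 1 a)) +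
      measure_pmf.expectation (pol 2 2) (\<lambda>a. measure_pmf.expectation (Pst 1 (qq H) 2 a) (?\<Phi> 2 a))) / 2"
    by (rule exp_roll_tri[where B=1, OF _ H]) simp
  also have "\<dots> = (1 - qq H) / 2"
  proof -
    have "(\<lambda>a. measure_pmf.expectation (Pst 1 (qq H) 2 a) (?\<Phi> 2 a)) = (\<lambda>a. 1 - qq H)"
      using cal_exp[OF qq_bnd] by auto
    then show ?thesis by simp
  qed
  finally show ?thesis .
qed

lemma data_exp_step:
  fixes f :: "(nat \<times> nat) list list \<Rightarrow> real"
  assumes "\<And>x. \<bar>f x\<bar> \<le> B"
  shows "measure_pmf.expectation (data_pmf P s1 A H \<zeta> ora gsel (Suc t)) f =
    measure_pmf.expectation (data_pmf P s1 A H \<zeta> ora gsel t)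
      (\<lambda>D. measure_pmf.expectation (roll P (behavior \<zeta> A gsel ora H D) 1 H s1) (\<lambda>e. f (D @ [e])))"
  by (simp only: data_pmf.simps int_bind_pmf[where B=B, OF assms] integral_map_pmf)

lemma ind_bnd: "\<bar>indicator S x :: real\<bar> \<le> 1" by (simp add: indicator_def)

lemma prob_G':
  assumes H: "H \<ge> 3" and z: "0 \<le> \<zeta>" "\<zeta> \<le> 1" and ora: "is_reg_oracle (rw H) (AA H) H (FF H) ora"
    and gs: "is_greedy_sel (AA H) gsel"
  shows "measure_pmf.expectation (data_pmf (PP H 1) 0 (AA H) H \<zeta> ora gsel (Suc t)) (indicator GG')
           \<ge> (1 - qq H) / 2 - real t * (3 / (2 * 2^H))"
proof (induction t)
  case 0
  have "measure_pmf.expectation (data_pmf (PP H 1) 0 (AA H) H \<zeta> ora gsel (Suc 0)) (indicator GG') =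
    measure_pmf.expectation (roll (PP H 1) (behavior \<zeta> (AA H) gsel ora H []) 1 H 0) (\<lambda>e. indicator GG' [e] :: real)"
  proof -
    have "measure_pmf.expectation (data_pmf (PP H 1) 0 (AA H) H \<zeta> ora gsel (Suc 0)) (indicator GG') =
      measure_pmf.expectation (data_pmf (PP H 1) 0 (AA H) H \<zeta> ora gsel 0)
      (\<lambda>D. measure_pmf.expectation (roll (PP H 1) (behavior \<zeta> (AA H) gsel ora H D) 1 H 0) (\<lambda>e. indicator GG' (D @ [e]) :: real))"
      by (rule data_exp_step[where B=1 and f="indicator GG'"]) (rule ind_bnd)
    then show ?thesis by (simp only: data_pmf.simps(1) expectation_return_pmf append_Nil)
  qed
  also have "(\<lambda>e. indicator GG' [e] :: real) = (\<lambda>e. if okE e \<and> calE e then 1 else 0)"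
    by (auto simp: GG'_def)
  finally show ?case using ep_first[OF H] by simp
next
  case (Suc t)
  let ?M = "data_pmf (PP H 1) 0 (AA H) H \<zeta> ora gsel (Suc t)"
  let ?\<epsilon> = "3 / (2 * 2^H) :: real"
  have N8: "(2::real)^3 \<le> 2^H" by (rule power_increasing) (use H in auto)
  have eps: "0 \<le> ?\<epsilon>" "?\<epsilon> \<le> 1" using N8 by (auto simp: field_simps)
  have pt: "measure_pmf.expectation (roll (PP H 1) (behavior \<zeta> (AA H) gsel ora H D) 1 H 0) (\<lambda>e. indicator GG' (D @ [e]))
        \<ge> indicator GG' D * (1 - ?\<epsilon>)" for D
  proof (cases "D \<in> GG'")
    case True
    have ind: "(\<lambda>e. indicator GG' (D @ [e]) :: real) = (\<lambda>e. if okE e then 1 else 0)"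
      using True by (auto simp: GG'_def)
    have fit: "fitted ora H D 2 = (\<lambda>s a. BB 0 (qq H) s a)" by (rule regress[OF H ora True])
    have a0: "gsel 2 (\<lambda>s a. BB 0 (qq H) s a) 1 \<notin> {0,1}" by (rule greedy_BB0(2)[OF gs]) (use H in simp)
    have "behavior \<zeta> (AA H) gsel ora H D 2 1 = act_pmf \<zeta> (AA H) (gsel 2 (\<lambda>s a. BB 0 (qq H) s a) 1)"
      by (simp add: behavior_def fit)
    from ep_good[where pol="behavior \<zeta> (AA H) gsel ora H D", OF H z a0 this] show ?thesis using True ind by simp
  next
    case False
    have "0 \<le> measure_pmf.expectation (roll (PP H 1) (behavior \<zeta> (AA H) gsel ora H D) 1 H 0) (\<lambda>e. indicator GG' (D @ [e]) :: real)"
      by (rule integral_nonneg_AE) auto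
    then show ?thesis using False by simp
  qed
  have "measure_pmf.expectation (data_pmf (PP H 1) 0 (AA H) H \<zeta> ora gsel (Suc (Suc t))) (indicator GG') =
    measure_pmf.expectation ?M (\<lambda>D. measure_pmf.expectation (roll (PP H 1) (behavior \<zeta> (AA H) gsel ora H D) 1 H 0) (\<lambda>e. indicator GG' (D @ [e]) :: real))"
    by (rule data_exp_step[where B=1 and f="indicator GG'"]) (rule ind_bnd)
  also have "\<dots> \<ge> measure_pmf.expectation ?M (\<lambda>D. indicator GG' D * (1 - ?\<epsilon>))"
  proof (rule integral_mono)
    show "integrable (measure_pmf ?M) (\<lambda>D. indicator GG' D * (1 - ?\<epsilon>))"
      by (rule integrable_bnd[where B=1]) (use eps in \<open>auto simp: indicator_def\<close>)
    show "integrable (measure_pmf ?M) (\<lambda>D. measure_pmf.expectation (roll (PP H 1) (behavior \<zeta> (AA H) gsel ora H D) 1 H 0) (\<lambda>e. indicator GG' (D @ [e]) :: real))"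
    proof (rule integrable_bnd[where B=1])
      fix D
      have "0 \<le> measure_pmf.expectation (roll (PP H 1) (behavior \<zeta> (AA H) gsel ora H D) 1 H 0) (\<lambda>e. indicator GG' (D @ [e]) :: real) \<and>
            measure_pmf.expectation (roll (PP H 1) (behavior \<zeta> (AA H) gsel ora H D) 1 H 0) (\<lambda>e. indicator GG' (D @ [e]) :: real) \<le> 1"
        by (rule exp_bounds) (auto simp: indicator_def)
      then show "\<bar>measure_pmf.expectation (roll (PP H 1) (behavior \<zeta> (AA H) gsel ora H D) 1 H 0) (\<lambda>e. indicator GG' (D @ [e]) :: real)\<bar> \<le> 1"
        by auto
    qed
  qed (rule pt)
  finally have st: "measure_pmf.expectation (data_pmf (PP H 1) 0 (AA H) H \<zeta> ora gsel (Suc (Suc t))) (indicator GG')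
     \<ge> measure_pmf.expectation ?M (indicator GG') * (1 - ?\<epsilon>)" by simp
  have le1: "measure_pmf.expectation ?M (indicator GG') \<le> (1::real)"
    using exp_bounds[of 0 "indicator GG' :: _ \<Rightarrow> real" 1 ?M] by (auto simp: indicator_def)
  have gen: "X * (1 - ?\<epsilon>) \<ge> X - ?\<epsilon>" if "X \<le> 1" for X :: real
  proof -
    have "X * ?\<epsilon> \<le> 1 * ?\<epsilon>" using that eps by (intro mult_right_mono) auto
    then show ?thesis by (simp add: algebra_simps)
  qed
  have "measure_pmf.expectation ?M (indicator GG') * (1 - ?\<epsilon>) \<ge> measure_pmf.expectation ?M (indicator GG') - ?\<epsilon>"
    by (rule gen[OF le1])
  then have "measure_pmf.expectation (data_pmf (PP H 1) 0 (AA H) H \<zeta> ora gsel (Suc (Suc t))) (indicator GG')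
     \<ge> measure_pmf.expectation ?M (indicator GG') - ?\<epsilon>" using st by linarith
  moreover have "measure_pmf.expectation ?M (indicator GG') - ?\<epsilon> \<ge> (1 - qq H) / 2 - real (Suc t) * ?\<epsilon>"
  proof -
    have "real (Suc t) * ?\<epsilon> = real t * ?\<epsilon> + ?\<epsilon>" by (simp add: distrib_right add_divide_distrib)
    then show ?thesis using Suc.IH by linarith
  qed
  ultimately show ?case by linarith
qed




lemma pmf_eq_GG:
  assumes H: "H \<ge> 3" and D: "D \<in> GG"
  shows "pmf (data_pmf (PP H 1) 0 (AA H) H \<zeta> ora gsel t) D = pmf (data_pmf (PP H 2) 0 (AA H) H \<zeta> ora gsel t) D"
proof (rule data_pmf_eq[where Q=okE])
  show "\<forall>e\<in>set D. okE e" using D by (simp add: GG_def)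
  fix pol e assume ok: "okE e"
  show "pmf (roll (PP H 1) pol 1 H 0) e = pmf (roll (PP H 2) pol 1 H 0) e"
  proof (rule roll_pmf_eq)
    fix i assume "i < length e"
    show "PP H 1 (1 + i) (fst (e ! i)) (snd (e ! i)) = PP H 2 (1 + i) (fst (e ! i)) (snd (e ! i))"
    proof (cases "i = 1")
      case True
      then show ?thesis using ok H by (auto simp: okE_def PP_def dstep3 Pst_def)
    next
      case False
      then show ?thesis using H by (auto simp: PP_def dstep3)
    qed
  qed
qed

lemma combine:
  fixes s1 s2 :: "'a \<Rightarrow> real"
  assumes b1: "\<And>x. 0 \<le> s1 x \<and> s1 x \<le> B" and b2: "\<And>x. 0 \<le> s2 x \<and> s2 x \<le> B"
    and sum: "\<And>x. s1 x + s2 x \<ge> 1/2"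
    and eq: "\<And>x. x \<in> G \<Longrightarrow> pmf M1 x = pmf M2 x"
  shows "measure_pmf.expectation M1 s1 + measure_pmf.expectation M2 s2 \<ge> (1/2) * measure_pmf.expectation M1 (indicator G)"
proof -
  have B: "0 \<le> B" using b1[of undefined] by simp
  have int: "integrable (measure_pmf M) (\<lambda>x. indicator G x * s x)" "integrable (measure_pmf M) s"
    if "\<And>x. 0 \<le> s x \<and> s x \<le> B" for M and s :: "'a \<Rightarrow> real"
    using that B by (auto intro!: integrable_bnd[where B=B] simp: indicator_def abs_le_iff)
  have i1: "measure_pmf.expectation M1 s1 \<ge> measure_pmf.expectation M1 (\<lambda>x. indicator G x * s1 x)"
    by (rule integral_mono[OF int(1)[OF b1] int(2)[OF b1]]) (use b1 in \<open>auto simp: indicator_def\<close>)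
  have i2: "measure_pmf.expectation M2 s2 \<ge> measure_pmf.expectation M2 (\<lambda>x. indicator G x * s2 x)"
    by (rule integral_mono[OF int(1)[OF b2] int(2)[OF b2]]) (use b2 in \<open>auto simp: indicator_def\<close>)
  have e2: "measure_pmf.expectation M2 (\<lambda>x. indicator G x * s2 x) = measure_pmf.expectation M1 (\<lambda>x. indicator G x * s2 x)"
    by (rule exp_eq_on[symmetric]) (rule eq)
  have add: "measure_pmf.expectation M1 (\<lambda>x. indicator G x * s1 x) + measure_pmf.expectation M1 (\<lambda>x. indicator G x * s2 x)
      = measure_pmf.expectation M1 (\<lambda>x. indicator G x * s1 x + indicator G x * s2 x)"
    by (rule Bochner_Integration.integral_add[symmetric, OF int(1)[OF b1] int(1)[OF b2]])
  have "measure_pmf.expectation M1 (\<lambda>x. indicator G x * s1 x + indicator G x * s2 x) \<ge> measure_pmf.expectation M1 (\<lambda>x. indicator G x * (1/2))"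
  proof (rule integral_mono)
    show "integrable (measure_pmf M1) (\<lambda>x. indicator G x * (1/2::real))"
      by (rule integrable_bnd[where B=1]) (auto simp: indicator_def)
    show "integrable (measure_pmf M1) (\<lambda>x. indicator G x * s1 x + indicator G x * s2 x)"
      by (rule Bochner_Integration.integrable_add[OF int(1)[OF b1] int(1)[OF b2]])
    fix x show "indicator G x * (1/2) \<le> indicator G x * s1 x + indicator G x * s2 x"
      using sum[of x] by (auto simp: indicator_def)
  qed
  moreover have "measure_pmf.expectation M1 (\<lambda>x. indicator G x * (1/2::real)) = (1/2) * measure_pmf.expectation M1 (indicator G)"
    by simp
  ultimately show ?thesis using i1 i2 e2 add by linarith
qed




lemma key_bound:
  assumes H: "H \<ge> 2" and z: "0 \<le> \<zeta>" "\<zeta> \<le> 1" and T: "real T < 1/8 * 2 powr (real H / 2)"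
    and ora: "is_reg_oracle (rw H) (AA H) H (FF H) ora" and gs: "is_greedy_sel (AA H) gsel"
    and pih: "\<forall>D h s. set_pmf (pihat D h s) \<subseteq> AA H"
  shows "exp_subopt (PP H 1) (rw H) (st1 H) (AA H) H \<zeta> ora gsel pihat T +
         exp_subopt (PP H 2) (rw H) (st1 H) (AA H) H \<zeta> ora gsel pihat T \<ge> 1/8"
proof -
  let ?M = "\<lambda>v. data_pmf (PP H v) (st1 H) (AA H) H \<zeta> ora gsel T"
  let ?s = "\<lambda>v D. opt_value (PP H v) (rw H) (st1 H) H (AA H) - Vv H v (pihat D)"
  have es: "exp_subopt (PP H v) (rw H) (st1 H) (AA H) H \<zeta> ora gsel pihat T = measure_pmf.expectation (?M v) (?s v)" for v
    by (simp add: exp_subopt_def Vv_def)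
  have b: "0 \<le> ?s v D \<and> ?s v D \<le> real H" if "v \<in> {1,2}" for v D
    using subopt_props[OF H that, of "pihat D"] pih by auto
  have sm: "?s 1 D + ?s 2 D \<ge> 1/2" for D by (rule subopt_sum[OF H])
  have pw: "2 powr (real H / 2) \<le> 2^H"
  proof -
    have "(2::real) powr (real H / 2) \<le> 2 powr (real H)" by (rule powr_mono) auto
    then show ?thesis by (simp add: powr_realpow)
  qed
  have TN: "real T < 2^H / 8" using T pw by simp
  have eqG: "pmf (?M 1) D = pmf (?M 2) D" if "D \<in> GG" for D
  proof (cases T)
    case 0
    then show ?thesis by simp
  next
    case (Suc t)
    have H3: "H \<ge> 3"
    proof (rule ccontr)
      assume "\<not> H \<ge> 3"
      then have "H = 2" using H by simp
      then show False using TN Suc by simp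
    qed
    then have st: "st1 H = 0" by (simp add: st1_def)
    show ?thesis unfolding st by (rule pmf_eq_GG[OF H3 that])
  qed
  have PG: "measure_pmf.expectation (?M 1) (indicator GG) \<ge> (1/4::real)"
  proof (cases T)
    case 0
    then show ?thesis by (simp add: GG_def)
  next
    case (Suc t)
    have H3: "H \<ge> 3"
    proof (rule ccontr)
      assume "\<not> H \<ge> 3"
      then have "H = 2" using H by simp
      then show False using TN Suc by simp
    qed
    then have st: "st1 H = 0" by (simp add: st1_def)
    have sub: "measure_pmf.expectation (?M 1) (indicator GG') \<le> (measure_pmf.expectation (?M 1) (indicator GG) :: real)"
      by (rule integral_mono) (auto intro!: integrable_bnd[where B=1] simp: indicator_def GG_def GG'_def)
    have pg: "measure_pmf.expectation (?M 1) (indicator GG') \<ge> (1 - qq H) / 2 - real t * (3 / (2 * 2^H))"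
      unfolding st Suc by (rule prob_G'[OF H3 z ora gs])
    have N8: "(2::real)^3 \<le> 2^H" by (rule power_increasing) (use H3 in auto)
    have q8: "qq H \<le> 1/8" using N8 by (simp add: qq_def field_simps)
    have "real t * (3 / (2 * 2^H)) \<le> (2^H / 8) * (3 / (2 * 2^H))"
      using TN Suc by (intro mult_right_mono) auto
    also have "\<dots> = 3/16" by simp
    finally have "real t * (3 / (2 * 2^H)) \<le> 3/16" .
    moreover have "(1 - qq H) / 2 \<ge> 7/16" using q8 by simp
    ultimately show ?thesis using pg sub by linarith
  qed
  have "measure_pmf.expectation (?M 1) (?s 1) + measure_pmf.expectation (?M 2) (?s 2) \<ge> (1/2) * measure_pmf.expectation (?M 1) (indicator GG)"
    by (rule combine[where B="real H"]) (use b sm eqG in auto)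
  then show ?thesis unfolding es using PG by linarith
qed

theorem proposition1:
  shows "\<exists>c0::real. c0 > 0 \<and>
    (\<forall>(H::nat) (\<zeta>::real) (c::real). 1 < H \<and> 0 \<le> \<zeta> \<and> \<zeta> \<le> 1 \<and> 0 < c \<and> c \<le> 1/6 \<longrightarrow>
      (\<exists>P1 P2 r s1 A Fc.
         finite A \<and> A \<noteq> {} \<and>
         (\<forall>h s a. 0 \<le> r h s a \<and> r h s a \<le> 1) \<and>
         low_rank P1 A H \<and> low_rank P2 A H \<and>
         (\<forall>h\<in>{1..H}. finite (Fc h) \<and> (\<forall>f\<in>Fc h. \<forall>s. \<forall>a\<in>A. 0 \<le> f s a \<and> f s a \<le> real H)) \<and>
         bellman_complete P1 r A H Fc \<and> bellman_complete P2 r A H Fc \<and>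
         (\<forall>T::nat. real T < c0 * 2 powr (real H / 2) \<longrightarrow>
            (\<forall>ora gsel pihat.
               is_reg_oracle r A H Fc ora \<and> is_greedy_sel A gsel \<and>
               (\<forall>D h s. set_pmf (pihat D h s) \<subseteq> A) \<longrightarrow>
               c / 32 \<le> max (exp_subopt P1 r s1 A H \<zeta> ora gsel pihat T)
                             (exp_subopt P2 r s1 A H \<zeta> ora gsel pihat T)))))"
proof (intro exI[of _ "1/8"] conjI allI impI)
  show "(0::real) < 1/8" by simp
  fix H :: nat and \<zeta> c :: real
  assume asm: "1 < H \<and> 0 \<le> \<zeta> \<and> \<zeta> \<le> 1 \<and> 0 < c \<and> c \<le> 1/6"
  then have H: "H \<ge> 2" and z: "0 \<le> \<zeta>" "\<zeta> \<le> 1" and c: "c \<le> 1/6" by auto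
  show "\<exists>P1 P2 r s1 A Fc.
         finite A \<and> A \<noteq> {} \<and>
         (\<forall>h s a. 0 \<le> r h s a \<and> r h s a \<le> 1) \<and>
         low_rank P1 A H \<and> low_rank P2 A H \<and>
         (\<forall>h\<in>{1..H}. finite (Fc h) \<and> (\<forall>f\<in>Fc h. \<forall>s. \<forall>a\<in>A. 0 \<le> f s a \<and> f s a \<le> real H)) \<and>
         bellman_complete P1 r A H Fc \<and> bellman_complete P2 r A H Fc \<and>
         (\<forall>T::nat. real T < 1/8 * 2 powr (real H / 2) \<longrightarrow>
            (\<forall>ora gsel pihat.
               is_reg_oracle r A H Fc ora \<and> is_greedy_sel A gsel \<and>
               (\<forall>D h s. set_pmf (pihat D h s) \<subseteq> A) \<longrightarrow>
               c / 32 \<le> max (exp_subopt P1 r s1 A H \<zeta> ora gsel pihat T)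
                             (exp_subopt P2 r s1 A H \<zeta> ora gsel pihat T)))"
  proof (rule exI[of _ "PP H 1"], rule exI[of _ "PP H 2"], rule exI[of _ "rw H"], rule exI[of _ "st1 H"],
         rule exI[of _ "AA H"], rule exI[of _ "FF H"], intro conjI allI impI ballI)
    show "finite (AA H)" by (rule AA_fin)
    show "AA H \<noteq> {}" by (rule AA_ne)
    show "0 \<le> rw H h s a" "rw H h s a \<le> 1" for h s a by (rule rw_bnd)+
    show "low_rank (PP H 1) (AA H) H" "low_rank (PP H 2) (AA H) H" by (rule low_rank_PP)+
    show "finite (FF H h)" if "h \<in> {1..H}" for h using FF_props[OF that] by blast
    show "0 \<le> f s a" "f s a \<le> real H" if "h \<in> {1..H}" "f \<in> FF H h" "a \<in> AA H" for h f s a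
      using FF_props[OF that(1)] that(2,3) by blast+
    show "bellman_complete (PP H 1) (rw H) (AA H) H (FF H)" by (rule bc) simp
    show "bellman_complete (PP H 2) (rw H) (AA H) H (FF H)" by (rule bc) simp
    fix T :: nat
      and ora :: "nat \<Rightarrow> (nat \<times> nat) list list \<Rightarrow> (nat \<Rightarrow> nat \<Rightarrow> real) \<Rightarrow> (nat \<Rightarrow> nat \<Rightarrow> real)"
      and gsel :: "nat \<Rightarrow> (nat \<Rightarrow> nat \<Rightarrow> real) \<Rightarrow> nat \<Rightarrow> nat"
      and pihat :: "(nat \<times> nat) list list \<Rightarrow> nat \<Rightarrow> nat \<Rightarrow> nat pmf"
    assume T: "real T < 1/8 * 2 powr (real H / 2)"
      and a: "is_reg_oracle (rw H) (AA H) H (FF H) ora \<and> is_greedy_sel (AA H) gsel \<and> (\<forall>D h s. set_pmf (pihat D h s) \<subseteq> AA H)"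
    have "exp_subopt (PP H 1) (rw H) (st1 H) (AA H) H \<zeta> ora gsel pihat T +
         exp_subopt (PP H 2) (rw H) (st1 H) (AA H) H \<zeta> ora gsel pihat T \<ge> 1/8"
      using key_bound[OF H z T] a by blast
    then show "c / 32 \<le> max (exp_subopt (PP H 1) (rw H) (st1 H) (AA H) H \<zeta> ora gsel pihat T)
                             (exp_subopt (PP H 2) (rw H) (st1 H) (AA H) H \<zeta> ora gsel pihat T)"
      using c by linarith
  qed
qed



end
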